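(* Let $p$ be a prime. Then $\mathcal{M}_p^{(0)}\subseteq\{1,2,6,42,1806\}$.
   Context: For positive integers $k,n$ let $S_k(n)=\sum_{i=1}^{n} i^k$. For an integer $a$, $\mathcal{M}_a$ denotes the set of positive integers $n$ such that $S_n(n)\equiv a\pmod{n}$. For a prime $p$, $\mathcal{M}_p^{(0)}=\{n\in\mathcal{M}_p : p\nmid n\}$. *)

theory Defs
  imports Main "HOL-Number_Theory.Cong"
begin

definition S :: "nat \<Rightarrow> nat \<Rightarrow> int" where
  "S k n = (\<Sum>i=1..n. (int i) ^ k)"

definition M :: "int \<Rightarrow> nat set" where
  "M a = {n. n > 0 \<and> [S n n = a] (mod (int n))}"

definition M0 :: "nat \<Rightarrow> nat set" where
  "M0 p = {n \<in> M (int p). \<not> p dvd n}"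

end

theory Submission
  imports Defs "HOL-Number_Theory.Number_Theory"
begin


lemma powsum_zero:
  fixes q k :: nat
  assumes q: "prime q" and nd: "\<not> (q - 1) dvd k"
  shows "[(\<Sum>i\<in>{0<..<q}. int i ^ k) = 0] (mod int q)"
proof -
  obtain g where g: "g \<in> totatives q" "ord q g = q - 1"
    using residue_prime_has_primroot[OF q] by blast
  have q1: "q > 1" using q prime_gt_1_nat by blast
  have cop: "coprime q g" using g(1) by (simp add: totatives_def coprime_commute)
  have pr: "residue_primroot q g"
    using q1 cop g(2) q by (simp add: residue_primroot_def totient_prime)
  have bij: "bij_betw (\<lambda>i. g ^ i mod q) {..<q - 1} {0<..<q}"
    using residue_primroot_is_generator[OF q1 pr] q by (simp add: totient_prime totatives_prime)
  have "(\<Sum>i\<in>{0<..<q}. int i ^ k) = (\<Sum>i<q - 1. int (g ^ i mod q) ^ k)"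
    using sum.reindex_bij_betw[OF bij, of "\<lambda>x. int x ^ k"] by simp
  also have "[\<dots> = (\<Sum>i<q - 1. (int g ^ k) ^ i)] (mod int q)"
  proof (rule cong_sum)
    fix i assume "i \<in> {..<q-1}"
    have "[int (g ^ i mod q) = int g ^ i] (mod int q)"
      by (simp add: of_nat_mod cong_def)
    hence "[int (g ^ i mod q) ^ k = (int g ^ i) ^ k] (mod int q)" by (rule cong_pow)
    thus "[int (g ^ i mod q) ^ k = (int g ^ k) ^ i] (mod int q)"
      by (simp add: power_mult[symmetric] mult.commute)
  qed
  finally have c1: "[(\<Sum>i\<in>{0<..<q}. int i ^ k) = (\<Sum>i<q - 1. (int g ^ k) ^ i)] (mod int q)" .
  define x where "x = int g ^ k"
  have "\<not> q dvd g ^ k"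
  proof
    assume "q dvd g ^ k"
    hence "q dvd g" using q prime_dvd_power by blast
    hence "q dvd gcd q g" by simp
    thus False using cop q1 by simp
  qed
  then have f: "[(g ^ k) ^ (q - 1) = 1] (mod q)" using fermat_theorem[OF q] by blast
  have "[x ^ (q - 1) = 1] (mod int q)" unfolding x_def
    using f by (metis cong_int_iff of_nat_1 of_nat_power)
  hence d1: "int q dvd x ^ (q - 1) - 1" by (simp add: cong_iff_dvd_diff)
  have "\<not> [g ^ k = 1] (mod q)" using g(2) nd ord_divides[of g k q] by simp
  hence "\<not> [x = 1] (mod int q)" unfolding x_def
    by (metis cong_int_iff of_nat_1 of_nat_power)
  hence d2: "\<not> int q dvd x - 1" by (simp add: cong_iff_dvd_diff)
  have pq: "prime (int q)" using q by simp
  from d1 have "int q dvd (x - 1) * (\<Sum>i<q - 1. x ^ i)" by (simp add: power_diff_1_eq)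
  with d2 pq have "int q dvd (\<Sum>i<q - 1. x ^ i)" using prime_dvd_mult_iff by blast
  hence "[(\<Sum>i<q - 1. x ^ i) = 0] (mod int q)" by (simp add: cong_0_iff)
  with c1 show ?thesis unfolding x_def using cong_trans by blast
qed

lemma dvd_prime_mult:
  fixes p d m :: nat
  assumes "prime p" "d dvd p * m"
  shows "d dvd m \<or> (\<exists>e. d = p * e \<and> e dvd m)"
proof (cases "p dvd d")
  case True
  then obtain e where e: "d = p * e" by blast
  with assms have "e dvd m" using prime_gt_0_nat by auto
  with e show ?thesis by blast
next
  case False
  hence "coprime d p" using assms(1) by (metis coprime_commute prime_imp_coprime)
  with assms(2) have "d dvd m" using coprime_dvd_mult_right_iff by blast
  thus ?thesis by blast
qed

lemma p2: "prime (2::nat)" by code_simp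
lemma p3: "prime (3::nat)" by code_simp
lemma p7: "prime (7::nat)" by code_simp
lemma p43: "prime (43::nat)" by code_simp

lemma div43: "d dvd (43::nat) \<Longrightarrow> d \<in> {1,43}"
  using p43 by (auto simp: prime_nat_iff)
lemma div301: "d dvd (301::nat) \<Longrightarrow> d \<in> {1,43,7,301}"
  using dvd_prime_mult[OF p7, of d 43] div43 by fastforce
lemma div903: "d dvd (903::nat) \<Longrightarrow> d \<in> {1,43,7,301,3,129,21,903}"
  using dvd_prime_mult[OF p3, of d 301] div301 by fastforce
lemma div1806: "d dvd (1806::nat) \<Longrightarrow> d \<in> {1,43,7,301,3,129,21,903,2,86,14,602,6,258,42,1806}"
  using dvd_prime_mult[OF p2, of d 903] div903 by fastforce

lemma sq_dvd1806:
  fixes n m :: nat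
  assumes sq: "\<forall>r. prime r \<longrightarrow> r dvd n \<longrightarrow> \<not> r * r dvd n"
  shows "m dvd n \<Longrightarrow> m > 0 \<Longrightarrow> (\<forall>r. prime r \<longrightarrow> r dvd m \<longrightarrow> r \<in> {2,3,7,43}) \<Longrightarrow> m dvd 1806"
proof (induction m rule: less_induct)
  case (less m)
  show ?case
  proof (cases "m = 1")
    case True thus ?thesis by simp
  next
    case False
    then obtain r where r: "prime r" "r dvd m" using prime_factor_nat by blast
    then obtain m' where m': "m = r * m'" by blast
    have r1: "r > 1" using r prime_gt_1_nat by blast
    have m'0: "m' > 0" using less.prems(2) m' by simp
    have lt: "m' < m" using m' r1 m'0 by simp
    have "m' dvd n" using less.prems(1) m' by (metis dvd_mult_right)
    moreover have "\<forall>s. prime s \<longrightarrow> s dvd m' \<longrightarrow> s \<in> {2,3,7,43}"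
      using less.prems(3) m' by (metis dvd_mult)
    ultimately have ih: "m' dvd 1806" using less.IH[OF lt] m'0 by blast
    have nr: "\<not> r dvd m'"
    proof
      assume "r dvd m'"
      hence "r * r dvd m" using m' by simp
      hence "r * r dvd n" using less.prems(1) by (rule dvd_trans)
      thus False using sq r(1) r(2) less.prems(1) dvd_trans by blast
    qed
    have "r \<in> {2,3,7,43}" using less.prems(3) r by blast
    hence rd: "r dvd 1806" by auto
    have "coprime r m'" using r(1) nr by (simp add: prime_imp_coprime)
    hence "r * m' dvd 1806" using rd ih by (simp add: divides_mult)
    thus ?thesis using m' by simp
  qed
qed

lemma nonprimes: "q \<in> {44,8,302,4,130,22,904,87,15,603,259,1807} \<Longrightarrow> \<not> prime (q::nat)"
  unfolding prime_nat_iff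
  by (auto intro: exI[of _ 2] exI[of _ 3] exI[of _ 7] exI[of _ 13])

lemma primes_in:
  fixes n :: nat
  assumes sq: "\<forall>r. prime r \<longrightarrow> r dvd n \<longrightarrow> \<not> r * r dvd n"
    and tot: "\<forall>r. prime r \<longrightarrow> r dvd n \<longrightarrow> (r - 1) dvd n"
  shows "prime q \<Longrightarrow> q dvd n \<Longrightarrow> q \<in> {2,3,7,43}"
proof (induction q rule: less_induct)
  case (less q)
  have q1: "q > 1" using less.prems(1) prime_gt_1_nat by blast
  have d: "(q - 1) dvd n" using tot less.prems by blast
  have "\<forall>r. prime r \<longrightarrow> r dvd (q - 1) \<longrightarrow> r \<in> {2,3,7,43}"
  proof (intro allI impI)
    fix r assume r: "prime r" "r dvd q - 1"
    have "r \<le> q - 1" using r(2) q1 by (simp add: dvd_imp_le)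
    hence "r < q" using q1 by simp
    moreover have "r dvd n" using r(2) d by (rule dvd_trans)
    ultimately show "r \<in> {2,3,7,43}" using less.IH r(1) by blast
  qed
  hence "(q - 1) dvd 1806" using sq_dvd1806[OF sq d] q1 by simp
  hence "q - 1 \<in> {1,43,7,301,3,129,21,903,2,86,14,602,6,258,42,1806}" by (rule div1806)
  hence "q = 2 \<or> q = 44 \<or> q = 8 \<or> q = 302 \<or> q = 4 \<or> q = 130 \<or> q = 22 \<or> q = 904 \<or> q = 3 \<or> q = 87 \<or> q = 15 \<or> q = 603 \<or> q = 7 \<or> q = 259 \<or> q = 43 \<or> q = 1807"
    using q1 by (elim insertE emptyE; arith)
  moreover have "q \<notin> {44,8,302,4,130,22,904,87,15,603,259,1807}"
    using nonprimes[of q] less.prems(1) by blast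
  ultimately show ?case by (elim disjE) simp_all
qed

lemma comb:
  fixes n :: nat
  assumes n0: "n > 0"
    and sq: "\<forall>r. prime r \<longrightarrow> r dvd n \<longrightarrow> \<not> r * r dvd n"
    and tot: "\<forall>r. prime r \<longrightarrow> r dvd n \<longrightarrow> (r - 1) dvd n"
  shows "n \<in> {1,2,6,42,1806}"
proof -
  have "\<forall>r. prime r \<longrightarrow> r dvd n \<longrightarrow> r \<in> {2,3,7,43}"
    using primes_in[OF sq tot] by blast
  hence "n dvd 1806" using sq_dvd1806[OF sq dvd_refl n0] by blast
  hence D: "n \<in> {1,43,7,301,3,129,21,903,2,86,14,602,6,258,42,1806}" by (rule div1806)
  have "3 dvd n \<longrightarrow> (3 - 1) dvd n" using tot p3 by blast
  hence h3: "3 dvd n \<longrightarrow> 2 dvd n" by simp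
  have "7 dvd n \<longrightarrow> (7 - 1) dvd n" using tot p7 by blast
  hence h7: "7 dvd n \<longrightarrow> 6 dvd n" by simp
  have "43 dvd n \<longrightarrow> (43 - 1) dvd n" using tot p43 by blast
  hence h43: "43 dvd n \<longrightarrow> 42 dvd n" by simp
  show ?thesis using D h3 h7 h43 by (elim insertE emptyE) simp_all
qed

lemma block:
  fixes q m k :: nat
  shows "[(\<Sum>i=1..q*m. int i ^ k) = int m * (\<Sum>i=1..q. int i ^ k)] (mod int q)"
proof (induction m)
  case 0 thus ?case by simp
next
  case (Suc m)
  have split: "(\<Sum>i=1..q*Suc m. int i ^ k) = (\<Sum>i=1..q*m. int i ^ k) + (\<Sum>i=1+q*m..q+q*m. int i ^ k)"
    using sum.ub_add_nat[of 1 "q*m" "\<lambda>i. int i ^ k" q] by (simp add: add.commute)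
  have sh: "(\<Sum>i=1+q*m..q+q*m. int i ^ k) = (\<Sum>i=1..q. int (i + q*m) ^ k)"
    by (rule sum.shift_bounds_cl_nat_ivl)
  have "[(\<Sum>i=1..q. int (i + q*m) ^ k) = (\<Sum>i=1..q. int i ^ k)] (mod int q)"
  proof (rule cong_sum)
    fix i
    have "[int (i + q*m) = int i] (mod int q)" by (simp add: cong_def)
    thus "[int (i + q*m) ^ k = int i ^ k] (mod int q)" by (rule cong_pow)
  qed
  hence "[(\<Sum>i=1..q*Suc m. int i ^ k) = int m * (\<Sum>i=1..q. int i ^ k) + (\<Sum>i=1..q. int i ^ k)] (mod int q)"
    using Suc.IH split sh cong_add by simp
  thus ?case by (simp add: algebra_simps)
qed

theorem mainTheorem2:
  fixes p :: nat
  assumes "prime p"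
  shows "M0 p \<subseteq> {1, 2, 6, 42, 1806}"
proof
  fix n assume "n \<in> M0 p"
  hence n0: "n > 0" and hS: "[S n n = int p] (mod int n)" and npn: "\<not> p dvd n"
    by (auto simp: M0_def M_def)
  have key: "\<not> q * q dvd n \<and> (q - 1) dvd n" if q: "prime q" "q dvd n" for q
  proof -
    obtain m where m: "n = q * m" using q(2) by blast
    have q1: "q > 1" using q(1) prime_gt_1_nat by blast
    define T where "T = (\<Sum>i=1..q. int i ^ n)"
    have hb: "[S n n = int m * T] (mod int q)"
    proof -
      have "S n n = (\<Sum>i=1..q*m. int i ^ n)" unfolding S_def using m by simp
      thus ?thesis unfolding T_def using block[where q=q and m=m and k=n] by simp
    qed
    have hp: "[S n n = int p] (mod int q)"
      using hS q(2) by (metis cong_dvd_modulus of_nat_dvd_iff)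
    have bad: False if d: "int q dvd int m * T"
    proof -
      have "[int m * T = 0] (mod int q)" using d by (simp add: cong_0_iff)
      hence "[int p = 0] (mod int q)" using hb hp by (metis cong_sym cong_trans)
      hence "int q dvd int p" by (simp add: cong_0_iff)
      hence "q dvd p" by simp
      hence "q = p" using q(1) assms by (simp add: primes_dvd_imp_eq)
      thus False using npn q(2) by simp
    qed
    have A: "\<not> q * q dvd n"
    proof
      assume "q * q dvd n"
      hence "q dvd m" using m q1 by simp
      hence "int q dvd int m * T" by simp
      thus False by (rule bad)
    qed
    have B: "(q - 1) dvd n"
    proof (rule ccontr)
      assume nd: "\<not> (q - 1) dvd n"
      have z: "[(\<Sum>i\<in>{0<..<q}. int i ^ n) = 0] (mod int q)" by (rule powsum_zero[OF q(1) nd])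
      have "{1..q} = insert q {0<..<q}" using q1 by auto
      hence "T = int q ^ n + (\<Sum>i\<in>{0<..<q}. int i ^ n)" unfolding T_def by simp
      moreover have "int q dvd int q ^ n" using n0 by simp
      ultimately have "int q dvd T" using z by (simp add: cong_0_iff)
      hence "int q dvd int m * T" by simp
      thus False by (rule bad)
    qed
    show ?thesis using A B by blast
  qed
  show "n \<in> {1, 2, 6, 42, 1806}" by (rule comb[OF n0]) (use key in blast)+
qed

end
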